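(* There exists $n_0$ such that for every $n \ge n_0$, every linear subspace $\mathcal{F}$ of $\{0,1\}^n = \mathbb{F}_2^n$ of dimension at least $0.44n$ contains a focal family of size $4$.
   Context: A family $x^{(0)}, x^{(1)}, x^{(2)}, x^{(3)}$ of $4$ distinct vectors in $\{0,1\}^n$ is focal (with focus $x^{(0)}$) if for every coordinate $i \in [n]$, at least $2$ of the $3$ entries $x^{(1)}_i, x^{(2)}_i, x^{(3)}_i$ are equal to $x^{(0)}_i$. $\mathcal{F}$ contains a focal family of size $4$ if some $4$ distinct members of $\mathcal{F}$, with some choice of focus among them, form a focal family. *)

theory Defs
  imports Complex_Main "HOL-Library.Z2" "HOL-Library.Function_Algebras"
begin

text \<open>Vectors of F_2^n are represented as functions nat => bit vanishing outside {0..<n}.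
  The space nat => bit is a vector space over the field bit (= F_2) with pointwise operations.\<close>

definition cube :: "nat \<Rightarrow> (nat \<Rightarrow> bit) set" where
  "cube n = {x. \<forall>i\<ge>n. x i = 0}"

global_interpretation f2: vector_space "\<lambda>(c::bit) (x::nat \<Rightarrow> bit). (\<lambda>i. c * x i)"
  by unfold_locales (rule ext; simp only: plus_fun_def distrib_left distrib_right mult.assoc mult_1_left)+

definition focal :: "nat \<Rightarrow> (nat \<Rightarrow> nat \<Rightarrow> bit) \<Rightarrow> bool" where
  "focal n x \<longleftrightarrow> inj_on x {0..3} \<and>
     (\<forall>i<n. card {j \<in> {1,2,3}. x j i = x 0 i} \<ge> 2)"

definition contains_focal4 :: "nat \<Rightarrow> (nat \<Rightarrow> bit) set \<Rightarrow> bool" where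
  "contains_focal4 n F \<longleftrightarrow> (\<exists>x. x ` {0..3} \<subseteq> F \<and> focal n x)"

end

theory Submission
  imports Defs
begin

definition sd :: "'a set \<Rightarrow> 'a set \<Rightarrow> 'a set" where "sd x y = (x - y) \<union> (y - x)"
definition chi :: "'a set \<Rightarrow> 'a set \<Rightarrow> real" where "chi u x = (-1) ^ card (u \<inter> x)"

lemma chi_sq: "chi u x * chi u x = 1"
  by (simp add: chi_def flip: power_add)

lemma chi_pm: "chi u x = 1 \<or> chi u x = -1"
  by (simp add: chi_def) (metis neg_one_even_power neg_one_odd_power)

lemma chi_comm: "chi u x = chi x u"
  by (simp add: chi_def Int_commute)

lemma chi_sd: assumes "finite u" shows "chi u (sd x y) = chi u x * chi u y"
proof -
  have e1: "card (u \<inter> x) = card (u \<inter> x \<inter> y) + card (u \<inter> x - y)"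
    using assms by (subst card_Un_disjoint[symmetric]) (auto intro: arg_cong[where f=card])
  have e2: "card (u \<inter> y) = card (u \<inter> x \<inter> y) + card (u \<inter> y - x)"
    using assms by (subst card_Un_disjoint[symmetric]) (auto intro: arg_cong[where f=card])
  have e3: "card (u \<inter> sd x y) = card (u \<inter> x - y) + card (u \<inter> y - x)"
    using assms by (subst card_Un_disjoint[symmetric]) (auto simp: sd_def intro: arg_cong[where f=card])
  have "chi u x * chi u y = (-1::real) ^ (2 * card (u \<inter> x \<inter> y)) * (-1) ^ (card (u \<inter> x - y) + card (u \<inter> y - x))"
    unfolding chi_def e1 e2 by (simp add: power_add mult_2 algebra_simps)
  also have "\<dots> = chi u (sd x y)" by (simp add: chi_def e3)
  finally show ?thesis by simp
qed

lemma sd_self_inv: "sd (sd x y) y = x" by (auto simp: sd_def)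
lemma sd_comm: "sd x y = sd y x" by (auto simp: sd_def)
lemma sd_assoc: "sd (sd x y) z = sd x (sd y z)" by (auto simp: sd_def)
lemma sd_empty[simp]: "sd x {} = x" "sd {} x = x" "sd x x = {}" by (auto simp: sd_def)
lemma sd_eq_empty: "sd x y = {} \<longleftrightarrow> x = y" by (auto simp: sd_def)
lemma sd_Pow: "x \<subseteq> I \<Longrightarrow> y \<subseteq> I \<Longrightarrow> sd x y \<subseteq> I" by (auto simp: sd_def)

lemma chi_sum_zero:
  assumes "finite I" "s \<subseteq> I" "s \<noteq> {}"
  shows "(\<Sum>x\<in>Pow I. chi s x) = 0"
proof -
  obtain i where i: "i \<in> s" using assms by auto
  have iI: "i \<in> I" using i assms by auto
  define J where "J = I - {i}"
  have IJ: "I = insert i J" "i \<notin> J" "finite J" using iI assms by (auto simp: J_def)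
  have neg: "chi s (insert i x) = - chi s x" if "x \<in> Pow J" for x
  proof -
    have "s \<inter> insert i x = insert i (s \<inter> x)" using i by auto
    moreover have "i \<notin> s \<inter> x" using that IJ by auto
    moreover have "finite (s \<inter> x)" using that IJ by (auto intro: finite_subset)
    ultimately show ?thesis by (simp add: chi_def)
  qed
  have inj: "inj_on (insert i) (Pow J)" using IJ by (auto simp: inj_on_def)
  have "(\<Sum>x\<in>Pow I. chi s x) = (\<Sum>x\<in>Pow J. chi s x) + (\<Sum>x\<in>insert i ` Pow J. chi s x)"
    unfolding IJ(1) Pow_insert using IJ
    by (subst sum.union_disjoint) (auto)
  also have "(\<Sum>x\<in>insert i ` Pow J. chi s x) = (\<Sum>x\<in>Pow J. chi s (insert i x))"
    by (subst sum.reindex[OF inj]) simp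
  also have "\<dots> = - (\<Sum>x\<in>Pow J. chi s x)" using neg by (simp add: sum_negf)
  finally show ?thesis by simp
qed

lemma chi_sum:
  assumes "finite I" "s \<subseteq> I"
  shows "(\<Sum>x\<in>Pow I. chi s x) = (if s = {} then 2 ^ card I else 0)"
  using chi_sum_zero[OF assms] assms by (simp add: chi_def card_Pow)

lemma chi_orth:
  assumes "finite I" "u \<subseteq> I" "v \<subseteq> I"
  shows "(\<Sum>x\<in>Pow I. chi u x * chi v x) = (if u = v then 2 ^ card I else 0)"
proof -
  have "(\<Sum>x\<in>Pow I. chi u x * chi v x) = (\<Sum>x\<in>Pow I. chi (sd u v) x)"
  proof (rule sum.cong[OF refl])
    fix x assume "x \<in> Pow I"
    then have "finite x" using assms by (auto intro: finite_subset)
    then show "chi u x * chi v x = chi (sd u v) x" by (simp add: chi_comm[of _ x] chi_sd)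
  qed
  also have "\<dots> = (if u = v then 2 ^ card I else 0)"
    using chi_sum[OF assms(1) sd_Pow[OF assms(2,3)]] by (simp add: sd_eq_empty)
  finally show ?thesis .
qed


definition hat :: "'a set \<Rightarrow> ('a set \<Rightarrow> real) \<Rightarrow> 'a set \<Rightarrow> real" where
  "hat I g u = (\<Sum>x\<in>Pow I. g x * chi u x)"

lemma sum_sd_reindex:
  assumes "y \<subseteq> I"
  shows "(\<Sum>x\<in>Pow I. h (sd x y)) = (\<Sum>x\<in>Pow I. h x)"
  by (rule sum.reindex_bij_witness[where i="\<lambda>x. sd x y" and j="\<lambda>x. sd x y"])
     (use assms in \<open>auto simp: sd_self_inv sd_def\<close>)

lemma sd_sd_empty_iff: "sd (sd x y) t = {} \<longleftrightarrow> y = sd x t"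
  by (auto simp: sd_def)

lemma chi_sum_comm:
  assumes "finite I" "z \<subseteq> I"
  shows "(\<Sum>u\<in>Pow I. chi u z) = (if z = {} then 2 ^ card I else 0)"
  using chi_sum[OF assms] by (simp add: chi_comm[of _ z])

lemma swap3: "(\<Sum>u\<in>A. \<Sum>x\<in>B. \<Sum>y\<in>C. h u x y) = (\<Sum>x\<in>B. \<Sum>y\<in>C. \<Sum>u\<in>A. h u x y)"
proof -
  have "(\<Sum>u\<in>A. \<Sum>x\<in>B. \<Sum>y\<in>C. h u x y) = (\<Sum>x\<in>B. \<Sum>u\<in>A. \<Sum>y\<in>C. h u x y)"
    by (rule sum.swap[of "\<lambda>u x. \<Sum>y\<in>C. h u x y"])
  also have "\<dots> = (\<Sum>x\<in>B. \<Sum>y\<in>C. \<Sum>u\<in>A. h u x y)"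
    by (intro sum.cong refl) (rule sum.swap)
  finally show ?thesis .
qed

lemma parseval_shift:
  assumes I: "finite I" and t: "t \<subseteq> I"
  shows "(\<Sum>x\<in>Pow I. g x * g (sd x t)) = (\<Sum>u\<in>Pow I. (hat I g u)^2 * chi u t) / 2 ^ card I"
proof -
  have fin: "\<And>u. u \<in> Pow I \<Longrightarrow> finite u" using I by (auto intro: finite_subset)
  have "(\<Sum>u\<in>Pow I. (hat I g u)^2 * chi u t)
      = (\<Sum>u\<in>Pow I. \<Sum>x\<in>Pow I. \<Sum>y\<in>Pow I. g x * g y * (chi u x * chi u y * chi u t))"
  proof (intro sum.cong refl)
    fix u
    show "(hat I g u)^2 * chi u t = (\<Sum>x\<in>Pow I. \<Sum>y\<in>Pow I. g x * g y * (chi u x * chi u y * chi u t))"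
      unfolding hat_def power2_eq_square sum_product
      unfolding sum_distrib_right
      by (intro sum.cong refl) (simp add: algebra_simps)
  qed
  also have "\<dots> = (\<Sum>x\<in>Pow I. \<Sum>y\<in>Pow I. \<Sum>u\<in>Pow I. g x * g y * (chi u x * chi u y * chi u t))"
    by (rule swap3)
  also have "\<dots> = (\<Sum>x\<in>Pow I. \<Sum>y\<in>Pow I. \<Sum>u\<in>Pow I. g x * g y * chi u (sd (sd x y) t))"
    using fin by (intro sum.cong refl) (simp add: chi_sd)
  also have "\<dots> = (\<Sum>x\<in>Pow I. \<Sum>y\<in>Pow I. g x * g y * (if y = sd x t then 2 ^ card I else 0))"
  proof (intro sum.cong refl)
    fix x y assume "x \<in> Pow I" "y \<in> Pow I"
    then have "sd (sd x y) t \<subseteq> I" using t by (auto simp: sd_def)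
    then show "(\<Sum>u\<in>Pow I. g x * g y * chi u (sd (sd x y) t)) = g x * g y * (if y = sd x t then 2 ^ card I else 0)"
      by (simp add: sum_distrib_left[symmetric] chi_sum_comm[OF I] sd_sd_empty_iff)
  qed
  also have "\<dots> = (\<Sum>x\<in>Pow I. g x * g (sd x t) * 2 ^ card I)"
  proof (intro sum.cong refl)
    fix x assume "x \<in> Pow I"
    then have "sd x t \<in> Pow I" using t by (auto simp: sd_def)
    then show "(\<Sum>y\<in>Pow I. g x * g y * (if y = sd x t then 2 ^ card I else 0)) = g x * g (sd x t) * 2 ^ card I"
      using I by (simp add: if_distrib[of "\<lambda>z. g x * g _ * z"] sum.delta' cong: if_cong)
  qed
  finally show ?thesis by (simp add: sum_distrib_right[symmetric])
qed

lemma chi_singletons: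
  assumes "finite I" "u \<subseteq> I"
  shows "(\<Sum>i\<in>I. chi u {i}) = real (card I) - 2 * real (card u)"
proof -
  have "(\<Sum>i\<in>I. chi u {i}) = (\<Sum>i\<in>I. if i \<in> u then -1 else 1)"
    by (intro sum.cong refl) (auto simp: chi_def)
  also have "\<dots> = - real (card (I \<inter> u)) + real (card (I - u))"
    using assms(1) by (simp add: sum.If_cases Diff_eq[symmetric])
  also have "card (I \<inter> u) = card u" using assms by (simp add: Int_absorb1)
  also have "card (I - u) = card I - card u" using assms by (simp add: card_Diff_subset finite_subset)
  also have "card u \<le> card I" using assms by (simp add: card_mono)
  ultimately show ?thesis by simp
qed

lemma sq_sum_ge_sum_sq:
  fixes a :: "'b \<Rightarrow> real"
  assumes "finite A" "\<And>x. x \<in> A \<Longrightarrow> 0 \<le> a x"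
  shows "(\<Sum>x\<in>A. (a x)^2) \<le> (\<Sum>x\<in>A. a x)^2"
proof -
  have "(\<Sum>x\<in>A. (a x)^2) \<le> (\<Sum>x\<in>A. \<Sum>y\<in>A. a x * a y)"
  proof (rule sum_mono)
    fix x assume x: "x \<in> A"
    have "a x * a x \<le> (\<Sum>y\<in>A. a x * a y)"
      using member_le_sum[of x A "\<lambda>y. a x * a y"] x assms by simp
    then show "(a x)^2 \<le> (\<Sum>y\<in>A. a x * a y)" by (simp add: power2_eq_square)
  qed
  also have "\<dots> = (\<Sum>x\<in>A. a x)^2" by (simp add: power2_eq_square sum_product)
  finally show ?thesis .
qed

lemma cs_card:
  fixes a :: "'b \<Rightarrow> real"
  assumes "finite A"
  shows "(\<Sum>x\<in>A. a x)^2 \<le> real (card A) * (\<Sum>x\<in>A. (a x)^2)"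
proof -
  have "0 \<le> (\<Sum>x\<in>A. \<Sum>y\<in>A. (a x - a y)^2)" by (intro sum_nonneg) simp
  also have "\<dots> = (\<Sum>x\<in>A. \<Sum>y\<in>A. (a x)^2) + (\<Sum>x\<in>A. \<Sum>y\<in>A. (a y)^2) - 2 * (\<Sum>x\<in>A. \<Sum>y\<in>A. a x * a y)"
    by (simp add: power2_eq_square algebra_simps sum_subtractf sum.distrib sum_distrib_left)
  also have "(\<Sum>x\<in>A. \<Sum>y\<in>A. (a x)^2) = real (card A) * (\<Sum>x\<in>A. (a x)^2)"
    by (simp add: sum_distrib_left mult.commute)
  also have "(\<Sum>x\<in>A. \<Sum>y\<in>A. (a y)^2) = real (card A) * (\<Sum>x\<in>A. (a x)^2)"
    by simp
  also have "(\<Sum>x\<in>A. \<Sum>y\<in>A. a x * a y) = (\<Sum>x\<in>A. a x)^2"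
    by (simp add: power2_eq_square sum_product)
  finally show ?thesis by simp
qed

lemma sd_swap: "sd (sd x z) y = sd (sd x y) z"
  by (auto simp: sd_def)

lemma ns_main:
  fixes f :: "'a set \<Rightarrow> real" and C :: "'a set set"
  assumes I: "finite I" and CI: "C \<subseteq> Pow I" and C0: "{} \<in> C"
    and Cc: "\<And>a b. a \<in> C \<Longrightarrow> b \<in> C \<Longrightarrow> sd a b \<in> C"
    and D: "\<And>c. c \<in> C \<Longrightarrow> c \<noteq> {} \<Longrightarrow> D \<le> card c"
    and fnn: "\<And>x. 0 \<le> f x"
    and eig: "\<And>x. x \<in> Pow I \<Longrightarrow> lam * f x \<le> (\<Sum>i\<in>I. f (sd x {i}))"
    and lam: "real (card I) - 2 * real D + 1 \<le> lam"
    and pos: "(\<Sum>x\<in>Pow I. (f x)^2) > 0"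
    and supp: "\<And>x. x \<in> Pow I \<Longrightarrow> f x \<noteq> 0 \<Longrightarrow> x \<in> Bs" and BsI: "Bs \<subseteq> Pow I"
  shows "real (card C) \<le> 2 * real D * real (card Bs)"
proof -
  define m where "m = card I"
  define N :: real where "N = 2 ^ m"
  have Npos: "N > 0" by (simp add: N_def)
  have finC: "finite C" using CI I by (meson finite_Pow_iff rev_finite_subset)
  have finP: "\<And>u. u \<in> Pow I \<Longrightarrow> finite u" using I by (auto intro: finite_subset)
  define w where "w y = (\<Sum>c\<in>C. chi c y)" for y
  have w_nn: "0 \<le> w y" if y: "y \<in> Pow I" for y
  proof (cases "\<exists>c0\<in>C. chi c0 y = -1")
    case True
    then obtain c0 where c0: "c0 \<in> C" "chi c0 y = -1" by blast
    have "w y = (\<Sum>c\<in>C. chi (sd c c0) y)"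
      unfolding w_def
      by (rule sum.reindex_bij_witness[where i="\<lambda>c. sd c c0" and j="\<lambda>c. sd c c0"])
         (auto simp: sd_self_inv c0 Cc)
    also have "\<dots> = (\<Sum>c\<in>C. - chi c y)"
      using finP[OF y] c0 by (intro sum.cong refl) (simp add: chi_comm[of _ y] chi_sd)
    also have "\<dots> = - w y" by (simp add: w_def sum_negf)
    finally show ?thesis by simp
  next
    case False
    then have "\<And>c. c \<in> C \<Longrightarrow> chi c y = 1" using chi_pm by blast
    then show ?thesis unfolding w_def by (simp add: sum_nonneg)
  qed
  have hat_w: "hat I w u = (if u \<in> C then N else 0)" if u: "u \<in> Pow I" for u
  proof -
    have "hat I w u = (\<Sum>c\<in>C. \<Sum>y\<in>Pow I. chi c y * chi u y)"
      unfolding hat_def w_def sum_distrib_right by (rule sum.swap)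
    also have "\<dots> = (\<Sum>c\<in>C. if c = u then N else 0)"
    proof (intro sum.cong refl)
      fix c assume "c \<in> C"
      then have "c \<subseteq> I" using CI by auto
      then show "(\<Sum>y\<in>Pow I. chi c y * chi u y) = (if c = u then N else 0)"
        using chi_orth[OF I \<open>c \<subseteq> I\<close>, of u] u by (simp add: N_def m_def)
    qed
    also have "\<dots> = (if u \<in> C then N else 0)" using finC by (simp add: sum.delta')
    finally show ?thesis .
  qed
  define F where "F x = (\<Sum>y\<in>Pow I. f (sd x y) * w y)" for x
  have F_nn: "0 \<le> F x" for x unfolding F_def using fnn w_nn by (auto intro!: sum_nonneg)
  have hat_F: "hat I F u = hat I f u * hat I w u" if u: "u \<in> Pow I" for u
  proof -
    have "hat I F u = (\<Sum>y\<in>Pow I. w y * (\<Sum>x\<in>Pow I. f (sd x y) * chi u x))"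
      unfolding hat_def F_def sum_distrib_right sum_distrib_left
      by (subst sum.swap) (intro sum.cong refl, simp add: algebra_simps)
    also have "\<dots> = (\<Sum>y\<in>Pow I. w y * (chi u y * hat I f u))"
    proof (intro sum.cong refl)
      fix y assume y: "y \<in> Pow I"
      have "(\<Sum>x\<in>Pow I. f (sd x y) * chi u x) = (\<Sum>x\<in>Pow I. f (sd (sd x y) y) * chi u (sd x y))"
        using y by (subst sum_sd_reindex[where y=y and h="\<lambda>z. f (sd z y) * chi u z", symmetric]) auto
      also have "\<dots> = (\<Sum>x\<in>Pow I. f x * chi u x * chi u y)"
        using finP[OF u] by (simp add: sd_self_inv chi_sd algebra_simps)
      also have "\<dots> = chi u y * hat I f u"
        by (simp add: hat_def sum_distrib_left algebra_simps)
      finally show "w y * (\<Sum>x\<in>Pow I. f (sd x y) * chi u x) = w y * (chi u y * hat I f u)"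
        by simp
    qed
    also have "\<dots> = hat I f u * hat I w u"
      by (simp add: hat_def sum_distrib_right sum_distrib_left algebra_simps)
    finally show ?thesis .
  qed
  have AF: "lam * F x \<le> (\<Sum>i\<in>I. F (sd x {i}))" if x: "x \<in> Pow I" for x
  proof -
    have "(\<Sum>i\<in>I. F (sd x {i})) = (\<Sum>y\<in>Pow I. w y * (\<Sum>i\<in>I. f (sd (sd x y) {i})))"
      unfolding F_def sum_distrib_left
      by (subst sum.swap) (intro sum.cong refl, simp add: algebra_simps sd_swap)
    also have "\<dots> \<ge> (\<Sum>y\<in>Pow I. w y * (lam * f (sd x y)))"
    proof (intro sum_mono mult_left_mono)
      fix y assume y: "y \<in> Pow I"
      then show "lam * f (sd x y) \<le> (\<Sum>i\<in>I. f (sd (sd x y) {i}))"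
        using eig[of "sd x y"] sd_Pow[of x I y] x by auto
      show "0 \<le> w y" using w_nn y by simp
    qed
    finally show ?thesis unfolding F_def by (simp add: sum_distrib_left algebra_simps)
  qed
  define S where "S = (\<Sum>u\<in>Pow I. (hat I F u)^2)"
  have S_nn: "0 \<le> S" unfolding S_def by (simp add: sum_nonneg)
  have normF: "(\<Sum>x\<in>Pow I. (F x)^2) = S / N"
    using parseval_shift[OF I, of "{}" F] by (simp add: S_def N_def m_def power2_eq_square chi_def)
  have quad: "(\<Sum>x\<in>Pow I. F x * (\<Sum>i\<in>I. F (sd x {i}))) = (\<Sum>u\<in>Pow I. (hat I F u)^2 * (real m - 2 * real (card u))) / N"
  proof -
    have "(\<Sum>x\<in>Pow I. F x * (\<Sum>i\<in>I. F (sd x {i}))) = (\<Sum>i\<in>I. \<Sum>x\<in>Pow I. F x * F (sd x {i}))"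
      by (simp add: sum_distrib_left) (rule sum.swap)
    also have "\<dots> = (\<Sum>i\<in>I. (\<Sum>u\<in>Pow I. (hat I F u)^2 * chi u {i}) / N)"
      using parseval_shift[OF I] by (intro sum.cong refl) (simp add: N_def m_def)
    also have "\<dots> = (\<Sum>i\<in>I. \<Sum>u\<in>Pow I. (hat I F u)^2 * chi u {i}) / N"
      by (simp add: sum_divide_distrib)
    also have "\<dots> = (\<Sum>u\<in>Pow I. \<Sum>i\<in>I. (hat I F u)^2 * chi u {i}) / N"
      by (subst sum.swap) (rule refl)
    also have "\<dots> = (\<Sum>u\<in>Pow I. (hat I F u)^2 * (\<Sum>i\<in>I. chi u {i})) / N"
      by (simp add: sum_distrib_left)
    also have "\<dots> = (\<Sum>u\<in>Pow I. (hat I F u)^2 * (real m - 2 * real (card u))) / N"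
      using chi_singletons[OF I] by (simp add: m_def)
    finally show ?thesis .
  qed
  have termwise: "(hat I F u)^2 * (real m - 2 * real (card u))
      \<le> (real m - 2 * real D) * (hat I F u)^2 + (if u = {} then 2 * real D * (hat I F u)^2 else 0)"
    if u: "u \<in> Pow I" for u
  proof (cases "u = {}")
    case True then show ?thesis by (simp add: algebra_simps)
  next
    case False
    show ?thesis
    proof (cases "u \<in> C")
      case True
      then have "real D \<le> real (card u)" using D False by simp
      then have "real D * (hat I F u)^2 \<le> real (card u) * (hat I F u)^2"
        by (intro mult_right_mono) auto
      then show ?thesis using False by (simp add: algebra_simps)
    next
      case nC: False
      then show ?thesis using hat_F[OF u] hat_w[OF u] by simp
    qed
  qed
  have "(\<Sum>u\<in>Pow I. (hat I F u)^2 * (real m - 2 * real (card u)))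
      \<le> (\<Sum>u\<in>Pow I. (real m - 2 * real D) * (hat I F u)^2 + (if u = {} then 2 * real D * (hat I F u)^2 else 0))"
    using termwise by (rule sum_mono)
  also have "\<dots> = (real m - 2 * real D) * S + 2 * real D * (hat I F {})^2"
    using I by (simp add: sum.distrib S_def sum_distrib_left)
  finally have qle: "(\<Sum>u\<in>Pow I. (hat I F u)^2 * (real m - 2 * real (card u))) \<le> (real m - 2 * real D) * S + 2 * real D * (hat I F {})^2" .
  have "lam * (S / N) \<le> ((real m - 2 * real D) * S + 2 * real D * (hat I F {})^2) / N"
  proof -
    have "(\<Sum>x\<in>Pow I. lam * (F x)^2) \<le> (\<Sum>x\<in>Pow I. F x * (\<Sum>i\<in>I. F (sd x {i})))"
    proof (intro sum_mono)
      fix x assume x: "x \<in> Pow I"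
      have "F x * (lam * F x) \<le> F x * (\<Sum>i\<in>I. F (sd x {i}))"
        using AF[OF x] F_nn[of x] by (rule mult_left_mono)
      then show "lam * (F x)^2 \<le> F x * (\<Sum>i\<in>I. F (sd x {i}))"
        by (simp add: power2_eq_square algebra_simps)
    qed
    then have "lam * (\<Sum>x\<in>Pow I. (F x)^2) \<le> (\<Sum>x\<in>Pow I. F x * (\<Sum>i\<in>I. F (sd x {i})))"
      by (simp add: sum_distrib_left)
    then show ?thesis using quad normF qle Npos by (simp add: divide_right_mono order_trans)
  qed
  then have "lam * S \<le> (real m - 2 * real D) * S + 2 * real D * (hat I F {})^2"
    using Npos by (simp add: field_simps)
  then have "(lam - real m + 2 * real D) * S \<le> 2 * real D * (hat I F {})^2" by (simp add: algebra_simps)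
  moreover have "S \<le> (lam - real m + 2 * real D) * S" using lam S_nn by (simp add: m_def mult_le_cancel_right1)
  ultimately have S_le: "S \<le> 2 * real D * (hat I F {})^2" by linarith
  have hw0: "hat I w {} = N" using hat_w[of "{}"] C0 by simp
  have hF0: "hat I F {} = N * (\<Sum>x\<in>Pow I. f x)"
    using hat_F[of "{}"] hw0 by (simp add: hat_def chi_def)
  have sumw2: "(\<Sum>y\<in>Pow I. (w y)^2) = N * real (card C)"
  proof -
    have "(\<Sum>y\<in>Pow I. (w y)^2) = (\<Sum>u\<in>Pow I. (hat I w u)^2) / N"
      using parseval_shift[OF I, of "{}" w] by (simp add: N_def m_def power2_eq_square chi_def)
    also have "(\<Sum>u\<in>Pow I. (hat I w u)^2) = (\<Sum>u\<in>Pow I. if u \<in> C then N^2 else 0)"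
      using hat_w by (intro sum.cong refl) simp
    also have "\<dots> = real (card C) * N^2"
      using CI I by (simp add: sum.If_cases Int_absorb1)
    finally show ?thesis using Npos by (simp add: power2_eq_square)
  qed
  have lowF: "N * real (card C) * (\<Sum>x\<in>Pow I. (f x)^2) \<le> (\<Sum>x\<in>Pow I. (F x)^2)"
  proof -
    have "(\<Sum>x\<in>Pow I. (F x)^2) \<ge> (\<Sum>x\<in>Pow I. \<Sum>y\<in>Pow I. (f (sd x y) * w y)^2)"
      unfolding F_def using I fnn w_nn
      by (intro sum_mono sq_sum_ge_sum_sq) auto
    also have "(\<Sum>x\<in>Pow I. \<Sum>y\<in>Pow I. (f (sd x y) * w y)^2) = (\<Sum>y\<in>Pow I. (w y)^2 * (\<Sum>x\<in>Pow I. (f (sd x y))^2))"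
      by (subst sum.swap) (simp add: sum_distrib_left power_mult_distrib algebra_simps)
    also have "\<dots> = (\<Sum>y\<in>Pow I. (w y)^2 * (\<Sum>x\<in>Pow I. (f x)^2))"
      by (intro sum.cong refl) (simp add: sum_sd_reindex[where h="\<lambda>z. (f z)^2"])
    also have "\<dots> = N * real (card C) * (\<Sum>x\<in>Pow I. (f x)^2)"
      by (simp add: sum_distrib_right[symmetric] sumw2)
    finally show ?thesis .
  qed
  have "N * real (card C) * (\<Sum>x\<in>Pow I. (f x)^2) \<le> 2 * real D * (N * (\<Sum>x\<in>Pow I. f x))^2 / N"
    using lowF normF S_le hF0 Npos by (simp add: divide_right_mono order_trans)
  then have key: "real (card C) * (\<Sum>x\<in>Pow I. (f x)^2) \<le> 2 * real D * (\<Sum>x\<in>Pow I. f x)^2"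
    using Npos by (simp add: power2_eq_square field_simps)
  have finBs: "finite Bs" using BsI I by (meson finite_Pow_iff rev_finite_subset)
  have "(\<Sum>x\<in>Pow I. f x) = (\<Sum>x\<in>Bs. f x)"
    using supp BsI I by (intro sum.mono_neutral_right) auto
  moreover have "(\<Sum>x\<in>Bs. (f x)^2) \<le> (\<Sum>x\<in>Pow I. (f x)^2)"
    using BsI I by (intro sum_mono2) auto
  ultimately have "(\<Sum>x\<in>Pow I. f x)^2 \<le> real (card Bs) * (\<Sum>x\<in>Pow I. (f x)^2)"
    using cs_card[OF finBs, of f] by (metis (no_types, lifting) mult_left_mono of_nat_0_le_iff order_trans)
  then have "real (card C) * (\<Sum>x\<in>Pow I. (f x)^2) \<le> (2 * real D * real (card Bs)) * (\<Sum>x\<in>Pow I. (f x)^2)"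
    using key by (smt (verit) mult.assoc mult_left_mono of_nat_0_le_iff)
  then show ?thesis using pos by simp
qed

definition phi :: "nat \<Rightarrow> nat \<Rightarrow> nat \<Rightarrow> real" where
  "phi r0 L i = (if r0 < i \<and> i < r0 + L then (real i - real r0) * (real r0 + real L - real i) else 0)"

lemma phi_nn: "0 \<le> phi r0 L i"
  by (simp add: phi_def)

lemma phi_formula: "r0 \<le> i \<Longrightarrow> i \<le> r0 + L \<Longrightarrow> phi r0 L i = (real i - real r0) * (real r0 + real L - real i)"
  by (auto simp: phi_def)

lemma A_card:
  assumes "finite I" "x \<subseteq> I"
  shows "(\<Sum>i\<in>I. h (card (sd x {i}))) = real (card x) * h (card x - 1) + real (card I - card x) * h (card x + 1)"
proof -
  have fx: "finite x" using assms finite_subset by blast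
  have "(\<Sum>i\<in>I. h (card (sd x {i}))) = (\<Sum>i\<in>x. h (card (sd x {i}))) + (\<Sum>i\<in>I - x. h (card (sd x {i})))"
    using sum.subset_diff[OF assms(2) assms(1), of "\<lambda>i. h (card (sd x {i}))"] by (simp add: add.commute)
  also have "(\<Sum>i\<in>x. h (card (sd x {i}))) = (\<Sum>i\<in>x. h (card x - 1))"
  proof (intro sum.cong refl)
    fix i assume "i \<in> x"
    then have "sd x {i} = x - {i}" by (auto simp: sd_def)
    then show "h (card (sd x {i})) = h (card x - 1)" using \<open>i \<in> x\<close> fx by simp
  qed
  also have "(\<Sum>i\<in>I - x. h (card (sd x {i}))) = (\<Sum>i\<in>I - x. h (card x + 1))"
  proof (intro sum.cong refl)
    fix i assume "i \<in> I - x"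
    then have "sd x {i} = insert i x" by (auto simp: sd_def)
    then show "h (card (sd x {i})) = h (card x + 1)" using \<open>i \<in> I - x\<close> fx by simp
  qed
  finally show ?thesis using assms by (simp add: card_Diff_subset fx)
qed

lemma eig_pointwise:
  fixes alpha :: real and m r0 L k :: nat
  assumes alpha: "alpha > 0" and L: "L \<ge> 3" and m: "r0 + L \<le> m" and k: "k \<le> m"
    and mu: "mu = min ((real m - real r0 - real L) * alpha) (real r0 / alpha)"
  shows "2 * mu * (real L - 2) / (real L - 1) * (alpha ^ k * phi r0 L k)
     \<le> real k * (alpha ^ (k - 1) * phi r0 L (k - 1)) + real (m - k) * (alpha ^ (k + 1) * phi r0 L (k + 1))"
proof (cases "r0 < k \<and> k < r0 + L")
  case False
  then have "phi r0 L k = 0" by (simp add: phi_def)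
  then show ?thesis using alpha by (simp add: phi_nn)
next
  case True
  then have k1: "k \<ge> 1" by simp
  define j where "j = real k - real r0"
  have j1: "1 \<le> j" "j \<le> real L - 1" using True by (auto simp: j_def)
  have P: "phi r0 L (k - 1) = (j - 1) * (real L - j + 1)"
    using True k1 by (subst phi_formula) (auto simp: j_def of_nat_diff algebra_simps)
  have Q: "phi r0 L (k + 1) = (j + 1) * (real L - j - 1)"
    using True by (subst phi_formula) (auto simp: j_def algebra_simps)
  have Ph: "phi r0 L k = j * (real L - j)"
    using True by (subst phi_formula) (auto simp: j_def algebra_simps)
  have Pnn: "0 \<le> (j - 1) * (real L - j + 1)" using j1 by simp
  have Qnn: "0 \<le> (j + 1) * (real L - j - 1)" using j1 by simp
  have mu_nn: "0 \<le> mu" using mu alpha m by auto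
  have mu1: "mu \<le> real k / alpha"
  proof -
    have "real r0 / alpha \<le> real k / alpha" using True alpha by (simp add: divide_right_mono)
    then show ?thesis using mu by linarith
  qed
  have mu2: "mu \<le> real (m - k) * alpha"
  proof -
    have "real m - real r0 - real L \<le> real (m - k)" using True k by (simp add: of_nat_diff)
    then have "(real m - real r0 - real L) * alpha \<le> real (m - k) * alpha" using alpha by simp
    then show ?thesis using mu by linarith
  qed
  have ak: "alpha ^ k = alpha * alpha ^ (k - 1)" "alpha ^ (k + 1) = alpha * alpha ^ k"
    using k1 by (simp_all add: power_eq_if[of alpha k] split: if_splits)
  have apos: "alpha ^ (k - 1) > 0" "alpha ^ k > 0" using alpha by simp_all
  have "real k * (alpha ^ (k - 1) * phi r0 L (k - 1)) = alpha ^ k * ((real k / alpha) * ((j - 1) * (real L - j + 1)))"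
    unfolding P ak(1) using alpha by (simp add: field_simps)
  also have "\<dots> \<ge> alpha ^ k * (mu * ((j - 1) * (real L - j + 1)))"
    using apos Pnn mu1 by (intro mult_left_mono mult_right_mono) auto
  finally have t1: "alpha ^ k * (mu * ((j - 1) * (real L - j + 1))) \<le> real k * (alpha ^ (k - 1) * phi r0 L (k - 1))" .
  have "real (m - k) * (alpha ^ (k + 1) * phi r0 L (k + 1)) = alpha ^ k * ((real (m - k) * alpha) * ((j + 1) * (real L - j - 1)))"
    unfolding Q ak(2) by (simp add: algebra_simps)
  also have "\<dots> \<ge> alpha ^ k * (mu * ((j + 1) * (real L - j - 1)))"
    using apos Qnn mu2 by (intro mult_left_mono mult_right_mono) auto
  finally have t2: "alpha ^ k * (mu * ((j + 1) * (real L - j - 1))) \<le> real (m - k) * (alpha ^ (k + 1) * phi r0 L (k + 1))" .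
  have sumPQ: "(j - 1) * (real L - j + 1) + (j + 1) * (real L - j - 1) = 2 * (j * (real L - j)) - 2"
    by (simp add: algebra_simps)
  have jL: "real L - 1 \<le> j * (real L - j)"
  proof -
    have "0 \<le> (j - 1) * (real L - 1 - j)" using j1 by simp
    then show ?thesis by (simp add: algebra_simps)
  qed
  have Lpos: "real L - 1 > 0" using L by simp
  define c where "c = 2 * (real L - 2) / (real L - 1)"
  have eqc: "2 * mu * (real L - 2) / (real L - 1) = mu * c" by (simp add: c_def)
  have H: "c * (j * (real L - j)) \<le> 2 * (j * (real L - j)) - 2"
  proof -
    have "2 * (real L - 2) * (j * (real L - j)) \<le> (2 * (j * (real L - j)) - 2) * (real L - 1)"
      using jL by (simp add: algebra_simps)
    then show ?thesis
      using Lpos by (simp add: c_def field_simps)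
  qed
  have "alpha ^ k * (mu * (c * (j * (real L - j)))) \<le> alpha ^ k * (mu * (2 * (j * (real L - j)) - 2))"
    using H mu_nn apos(2) by (intro mult_left_mono) auto
  then have "2 * mu * (real L - 2) / (real L - 1) * (alpha ^ k * phi r0 L k) \<le> alpha ^ k * (mu * (2 * (j * (real L - j)) - 2))"
    unfolding eqc Ph by (simp add: algebra_simps)
  also have "\<dots> = alpha ^ k * (mu * ((j - 1) * (real L - j + 1))) + alpha ^ k * (mu * ((j + 1) * (real L - j - 1)))"
    by (simp add: sumPQ[symmetric] algebra_simps)
  finally show ?thesis using t1 t2 by linarith
qed


lemma code_bound:
  fixes C :: "'a set set" and alpha :: real
  assumes I: "finite I" and CI: "C \<subseteq> Pow I" and C0: "{} \<in> C"
    and Cc: "\<And>a b. a \<in> C \<Longrightarrow> b \<in> C \<Longrightarrow> sd a b \<in> C"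
    and D: "\<And>c. c \<in> C \<Longrightarrow> c \<noteq> {} \<Longrightarrow> D \<le> card c"
    and alpha: "alpha > 0" and L: "L \<ge> 3" and m: "r0 + L \<le> card I"
    and lam: "real (card I) - 2 * real D + 1 \<le> 2 * min ((real (card I) - real r0 - real L) * alpha) (real r0 / alpha) * (real L - 2) / (real L - 1)"
  shows "real (card C) \<le> 2 * real D * real (card {x \<in> Pow I. card x \<le> r0 + L})"
proof -
  define mu where "mu = min ((real (card I) - real r0 - real L) * alpha) (real r0 / alpha)"
  define f where "f x = alpha ^ card x * phi r0 L (card x)" for x :: "'a set"
  have fnn: "0 \<le> f x" for x using alpha phi_nn by (simp add: f_def)
  have eig: "2 * mu * (real L - 2) / (real L - 1) * f x \<le> (\<Sum>i\<in>I. f (sd x {i}))" if x: "x \<in> Pow I" for x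
  proof -
    have cx: "card x \<le> card I" using x I by (simp add: card_mono)
    have "(\<Sum>i\<in>I. f (sd x {i})) = real (card x) * (alpha ^ (card x - 1) * phi r0 L (card x - 1))
        + real (card I - card x) * (alpha ^ (card x + 1) * phi r0 L (card x + 1))"
      unfolding f_def using A_card[OF I, of x "\<lambda>k. alpha ^ k * phi r0 L k"] x by simp
    then show ?thesis unfolding f_def
      using eig_pointwise[OF alpha L m cx mu_def] by simp
  qed
  have "r0 + 1 \<le> card I" using m L by simp
  then obtain x0 where x0: "x0 \<subseteq> I" "card x0 = r0 + 1"
    by (rule obtain_subset_with_card_n)
  have fx0: "f x0 > 0" unfolding f_def phi_def using x0 alpha L by simp
  have pos: "(\<Sum>x\<in>Pow I. (f x)^2) > 0"
  proof -
    have "(f x0)^2 \<le> (\<Sum>x\<in>Pow I. (f x)^2)"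
      using x0 I by (intro member_le_sum) auto
    moreover have "(f x0)^2 > 0" using fx0 by simp
    ultimately show ?thesis by linarith
  qed
  have supp: "x \<in> {x \<in> Pow I. card x \<le> r0 + L}" if "x \<in> Pow I" "f x \<noteq> 0" for x
  proof -
    have "phi r0 L (card x) \<noteq> 0" using that(2) by (simp add: f_def)
    then have "card x \<le> r0 + L" unfolding phi_def by (cases "r0 < card x \<and> card x < r0 + L") auto
    then show ?thesis using that(1) by simp
  qed
  have lam': "real (card I) - 2 * real D + 1 \<le> 2 * mu * (real L - 2) / (real L - 1)"
    using lam by (simp add: mu_def)
  have BsI: "{x \<in> Pow I. card x \<le> r0 + L} \<subseteq> Pow I" by blast
  show ?thesis
    by (rule ns_main[OF I CI C0 Cc D fnn eig lam' pos supp BsI])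
qed

lemma ball_card:
  assumes "finite I"
  shows "card {x \<in> Pow I. card x \<le> s} = (\<Sum>i\<le>s. card I choose i)"
proof -
  have eq: "{x \<in> Pow I. card x \<le> s} = (\<Union>i\<in>{..s}. {x. x \<subseteq> I \<and> card x = i})" by auto
  have "card (\<Union>i\<in>{..s}. {x. x \<subseteq> I \<and> card x = i}) = (\<Sum>i\<le>s. card {x. x \<subseteq> I \<and> card x = i})"
    using assms by (intro card_UN_disjoint) (auto intro: finite_subset[of _ "Pow I"])
  then show ?thesis unfolding eq using n_subsets[OF assms] by simp
qed

lemma binom_tail:
  fixes p :: real
  assumes p: "0 < p" "p \<le> 1/2" and s: "s \<le> m"
  shows "(\<Sum>i\<le>s. real (m choose i)) * (p ^ s * (1 - p) ^ (m - s)) \<le> 1"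
proof -
  have "(\<Sum>i\<le>s. real (m choose i)) * (p ^ s * (1 - p) ^ (m - s)) = (\<Sum>i\<le>s. real (m choose i) * (p ^ s * (1 - p) ^ (m - s)))"
    by (simp add: sum_distrib_right)
  also have "\<dots> \<le> (\<Sum>i\<le>s. real (m choose i) * (p ^ i * (1 - p) ^ (m - i)))"
  proof (intro sum_mono mult_left_mono)
    fix i assume "i \<in> {..s}"
    then have i: "i \<le> s" by simp
    have "p ^ (s - i) \<le> (1 - p) ^ (s - i)" using p by (intro power_mono) auto
    then have "p ^ i * p ^ (s - i) * (1 - p) ^ (m - s) \<le> p ^ i * (1 - p) ^ (s - i) * (1 - p) ^ (m - s)"
      using p by (intro mult_right_mono mult_left_mono) auto
    moreover have "p ^ i * p ^ (s - i) = p ^ s" using i by (simp add: power_add[symmetric])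
    moreover have "(1 - p) ^ (s - i) * (1 - p) ^ (m - s) = (1 - p) ^ (m - i)"
      using i s by (simp add: power_add[symmetric])
    ultimately show "p ^ s * (1 - p) ^ (m - s) \<le> p ^ i * (1 - p) ^ (m - i)"
      by (simp add: mult.assoc)
  qed simp
  also have "\<dots> \<le> (\<Sum>i\<le>m. real (m choose i) * (p ^ i * (1 - p) ^ (m - i)))"
    using s p by (intro sum_mono2) auto
  also have "\<dots> = 1" using binomial_ring[of p "1 - p" m] by (simp add: mult.assoc)
  finally show ?thesis .
qed

lemma ln_ineq_from_num:
  fixes a b :: real assumes "0 < a" "a \<le> b" shows "ln a \<le> ln b"
  using assms by simp

lemma ln_comb:
  fixes a b c e :: real
  assumes "0 < a" "0 < b" "0 < c" "0 < e" "a ^ i * b ^ k \<le> c ^ j * e ^ l"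
  shows "real i * ln a + real k * ln b \<le> real j * ln c + real l * ln e"
proof -
  have "ln (a ^ i * b ^ k) \<le> ln (c ^ j * e ^ l)" using assms by simp
  then show ?thesis using assms by (simp add: ln_mult ln_realpow)
qed

lemma logA: "11 * ln (11::real) - 10 * ln 10 \<le> (150/31) * ln 2"
proof -
  have e1: "real 1 * ln 5 + real 11 * ln (11::real) \<le> real 1 * ln 143 + real 10 * ln 10"
    by (rule ln_comb) simp_all
  have e2: "real 0 * ln 5 + real 31 * ln (143::real) \<le> real 150 * ln 2 + real 31 * ln 5"
    by (rule ln_comb) simp_all
  from e1 e2 show ?thesis by simp
qed

lemma logB: "20 * ln (20::real) - 19 * ln 19 \<le> (23/4) * ln 2"
proof -
  have e1: "real 1 * ln 2 + real 20 * ln (20::real) \<le> real 1 * ln 107 + real 19 * ln 19"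
    by (rule ln_comb) simp_all
  have e2: "real 0 * ln 2 + real 4 * ln (107::real) \<le> real 27 * ln 2 + real 0 * ln 2"
    by (rule ln_comb) simp_all
  from e1 e2 show ?thesis by simp
qed

lemma asy1:
  fixes c e :: real assumes e: "e > 0"
  shows "\<exists>N::nat. \<forall>n\<ge>N. ln (2 * real n) + c < e * real n"
proof -
  define t where "t = 4 / e"
  have t: "t > 0" using e by (simp add: t_def)
  define N where "N = nat (ceiling (2 * (\<bar>ln t\<bar> + \<bar>c\<bar>) / e)) + 1"
  have "ln (2 * real n) + c < e * real n" if n: "n \<ge> N" for n
  proof -
    have n1: "real n \<ge> 1" using n by (simp add: N_def)
    have "real n \<ge> 2 * (\<bar>ln t\<bar> + \<bar>c\<bar>) / e"
      using n unfolding N_def by linarith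
    then have big: "e * real n \<ge> 2 * (\<bar>ln t\<bar> + \<bar>c\<bar>)" using e by (simp add: field_simps)
    have "ln (2 * real n) = ln t + ln (2 * real n / t)"
      using t n1 by (simp add: ln_div)
    also have "ln (2 * real n / t) \<le> 2 * real n / t - 1"
      using t n1 by (intro ln_le_minus_one) simp
    also have "2 * real n / t = e * real n / 2" using e by (simp add: t_def field_simps)
    finally have "ln (2 * real n) \<le> ln t + e * real n / 2 - 1" by simp
    moreover have "2 * (\<bar>ln t\<bar> + \<bar>c\<bar>) = 2 * \<bar>ln t\<bar> + 2 * \<bar>c\<bar>" by simp
    ultimately show ?thesis using big abs_ge_self[of "ln t"] abs_ge_self[of c] by linarith
  qed
  then show ?thesis by blast
qed

lemma div_bounds:
  fixes n q :: nat assumes "q = n div c" "c > 0"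
  shows "real c * real q \<le> real n" "real n < real c * real q + real c"
proof -
  have "c * q \<le> n" using assms by simp
  then show "real c * real q \<le> real n" by (metis of_nat_le_iff of_nat_mult)
  have "n < c * q + c" using assms
    by (metis add.commute div_mult_mod_eq mod_less_divisor mult.commute nat_add_left_cancel_less)
  then show "real n < real c * real q + real c" by (metis of_nat_add of_nat_less_iff of_nat_mult)
qed

lemma EA: "\<forall>n\<ge>(474479::nat). \<forall>d::nat. real d \<ge> (427/2000) * real n \<longrightarrow>
   n div 11 + 1000 \<le> n \<and>
   real n - 2 * real d + 1 \<le> 2 * min ((real n - real (n div 11) - real (1000::nat)) * (1581/5000)) (real (n div 11) / (1581/5000)) * (real (1000::nat) - 2) / (real (1000::nat) - 1)"
proof (intro allI impI conjI)
  fix n d :: nat assume n: "n \<ge> 474479" and d: "real d \<ge> (427/2000) * real n"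
  define q where "q = n div 11"
  have q: "11 * real q \<le> real n" "real n < 11 * real q + 11" using div_bounds[OF q_def] by simp_all
  have rn: "real n \<ge> 474479" using n by simp
  show "n div 11 + 1000 \<le> n"
  proof -
    have "real q + 1000 \<le> real n" using q rn by linarith
    then show ?thesis unfolding q_def[symmetric] by linarith
  qed
  have l1: "real n - 2 * real d + 1 \<le> 2 * ((real n - real q - 1000) * (1581/5000)) * 998 / 999"
    using q rn d by (simp add: field_simps; linarith)
  have l2: "real n - 2 * real d + 1 \<le> 2 * (real q / (1581/5000)) * 998 / 999"
    using q rn d by (simp add: field_simps; linarith)
  show "real n - 2 * real d + 1 \<le> 2 * min ((real n - real (n div 11) - real (1000::nat)) * (1581/5000)) (real (n div 11) / (1581/5000)) * (real (1000::nat) - 2) / (real (1000::nat) - 1)"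
    unfolding q_def[symmetric] using l1 l2 by (simp add: min_def)
qed

lemma EB: "\<forall>m\<ge>(50000::nat). \<forall>d d2 k::nat. real d < (427/2000) * (real m + real d) \<longrightarrow>
   real k \<ge> 0.44 * (real m + real d) \<longrightarrow> k \<le> d + d2 \<longrightarrow>
   m div 20 + 1000 \<le> m \<and>
   real m - 2 * real d2 + 1 \<le> 2 * min ((real m - real (m div 20) - real (1000::nat)) * (1147/5000)) (real (m div 20) / (1147/5000)) * (real (1000::nat) - 2) / (real (1000::nat) - 1)"
proof (intro allI impI conjI)
  fix m d d2 k :: nat assume m: "m \<ge> 50000" and d: "real d < (427/2000) * (real m + real d)"
    and k: "real k \<ge> 0.44 * (real m + real d)" and kd: "k \<le> d + d2"
  define q where "q = m div 20"
  have q: "20 * real q \<le> real m" "real m < 20 * real q + 20" using div_bounds[OF q_def] by simp_all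
  have rm: "real m \<ge> 50000" using m by simp
  have kd': "real k \<le> real d + real d2" using kd by simp
  show "m div 20 + 1000 \<le> m"
  proof -
    have "real q + 1000 \<le> real m" using q rm by linarith
    then show ?thesis unfolding q_def[symmetric] by linarith
  qed
  have l1: "real m - 2 * real d2 + 1 \<le> 2 * ((real m - real q - 1000) * (1147/5000)) * 998 / 999"
    using q rm d k kd' by (simp add: field_simps; linarith)
  have l2: "real m - 2 * real d2 + 1 \<le> 2 * (real q / (1147/5000)) * 998 / 999"
    using q rm d k kd' by (simp add: field_simps; linarith)
  show "real m - 2 * real d2 + 1 \<le> 2 * min ((real m - real (m div 20) - real (1000::nat)) * (1147/5000)) (real (m div 20) / (1147/5000)) * (real (1000::nat) - 2) / (real (1000::nat) - 1)"
    unfolding q_def[symmetric] using l1 l2 by (simp add: min_def)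
qed


lemma inv_bound:
  fixes B :: real and b c :: real and s t :: nat
  assumes "B * ((1 / b) ^ s * (1 - 1 / b) ^ t) \<le> 1" "b > 1" "0 \<le> B"
  shows "B \<le> b ^ s * (b / (b - 1)) ^ t"
proof -
  have b0: "b > 0" "b - 1 > 0" using assms by auto
  have e1: "(1 / b) ^ s * b ^ s = 1" using b0 by (simp add: power_mult_distrib[symmetric])
  have e2: "(1 - 1 / b) ^ t * (b / (b - 1)) ^ t = 1"
  proof -
    have p: "(1 - 1 / b) * (b / (b - 1)) = 1" using b0 by (simp add: field_simps)
    have "(1 - 1 / b) ^ t * (b / (b - 1)) ^ t = ((1 - 1 / b) * (b / (b - 1))) ^ t"
      by (simp only: power_mult_distrib)
    also have "\<dots> = 1" by (simp only: p power_one)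
    finally show ?thesis .
  qed
  have "B = (B * ((1 / b) ^ s * (1 - 1 / b) ^ t)) * (b ^ s * (b / (b - 1)) ^ t)"
    using e1 e2 by (simp add: algebra_simps)
  also have "\<dots> \<le> 1 * (b ^ s * (b / (b - 1)) ^ t)"
    using assms b0 by (intro mult_right_mono) auto
  finally show ?thesis by simp
qed

lemma numA:
  fixes B :: real and n k s :: nat
  assumes h: "2 ^ k \<le> 2 * real n * B" and bt: "B * ((1 / 11) ^ s * (1 - 1 / 11) ^ (n - s)) \<le> 1"
    and s: "s \<le> n" "real s \<le> real n / 11 + 1000" and k: "real k \<ge> 0.44 * real n"
    and asy: "ln (2 * real n) + 1000 * ln 10 < (1/8525) * real n * ln 2" and n1: "n \<ge> 1"
  shows False
proof -
  have Bpos: "B > 0"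
  proof -
    have "0 < 2 * real n * B" using h by (smt (verit) zero_less_power)
    then show ?thesis using n1 by (simp add: zero_less_mult_iff)
  qed
  have hB: "B \<le> 11 ^ s * (11 / 10) ^ (n - s)"
    using inv_bound[of B 11 s "n - s"] bt Bpos by simp
  have "real k * ln 2 = ln (2 ^ k)" by (simp add: ln_realpow)
  also have "\<dots> \<le> ln (2 * real n * B)" by (rule ln_ineq_from_num[OF _ h]) simp
  also have "\<dots> = ln (2 * real n) + ln B" using Bpos n1 by (simp add: ln_mult)
  also have "ln B \<le> ln (11 ^ s * (11 / 10) ^ (n - s))" using hB Bpos by simp
  also have "\<dots> = real s * ln 11 + real (n - s) * (ln 11 - ln 10)"
    by (simp add: ln_mult ln_realpow ln_div)
  finally have L1: "real k * ln 2 \<le> ln (2 * real n) + (real s * ln 11 + (real n - real s) * (ln 11 - ln 10))"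
    using s by (simp add: of_nat_diff)
  have L2: "(real n - real s) * (ln 11 - ln 10) = real n * ln 11 - real n * ln 10 - real s * ln 11 + real s * ln 10"
    by (simp add: algebra_simps)
  have L3: "real s * ln 10 \<le> real n * ln 10 / 11 + 1000 * ln 10"
  proof -
    have "real s * ln 10 \<le> (real n / 11 + 1000) * ln 10" using s by (intro mult_right_mono) auto
    then show ?thesis by (simp add: algebra_simps)
  qed
  have L4: "11 * (real n * ln 11) - 10 * (real n * ln 10) \<le> (150/31) * (real n * ln 2)"
  proof -
    have "real n * (11 * ln 11 - 10 * ln 10) \<le> real n * ((150/31) * ln 2)"
      using logA by (intro mult_left_mono) auto
    then show ?thesis by (simp add: algebra_simps)
  qed
  have L5: "(11/25) * (real n * ln 2) \<le> real k * ln 2"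
  proof -
    have "(11/25) * real n \<le> real k" using k by simp
    then show ?thesis by (simp add: mult.assoc[symmetric])
  qed
  have asy': "ln (2 * real n) + 1000 * ln 10 < (1/8525) * (real n * ln 2)"
    using asy by (simp add: mult.assoc)
  show False using L1 L2 L3 L4 L5 asy' by linarith
qed

lemma numB:
  fixes B :: real and n m d k s :: nat
  assumes h: "2 ^ k \<le> 2 ^ d * (2 * real n * B)" and bt: "B * ((1 / 20) ^ s * (1 - 1 / 20) ^ (m - s)) \<le> 1"
    and s: "s \<le> m" "real s \<le> real m / 20 + 1000" and k: "real k \<ge> 0.44 * real n"
    and md: "m + d = n" and d: "real d < (427/2000) * real n"
    and asy: "ln (2 * real n) + 1000 * ln 19 < (61/160000) * real n * ln 2" and n1: "n \<ge> 1"
  shows False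
proof -
  have Bpos: "B > 0"
  proof -
    have "0 < 2 ^ d * (2 * real n * B)" using h by (smt (verit) zero_less_power)
    then show ?thesis using n1 by (simp add: zero_less_mult_iff)
  qed
  have hB: "B \<le> 20 ^ s * (20 / 19) ^ (m - s)"
    using inv_bound[of B 20 s "m - s"] bt Bpos by simp
  have "real k * ln 2 = ln (2 ^ k)" by (simp add: ln_realpow)
  also have "\<dots> \<le> ln (2 ^ d * (2 * real n * B))" by (rule ln_ineq_from_num[OF _ h]) simp
  also have "\<dots> = real d * ln 2 + ln (2 * real n) + ln B" using Bpos n1 by (simp add: ln_mult ln_realpow)
  also have "ln B \<le> ln (20 ^ s * (20 / 19) ^ (m - s))" using hB Bpos by simp
  also have "\<dots> = real s * ln 20 + real (m - s) * (ln 20 - ln 19)"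
    by (simp add: ln_mult ln_realpow ln_div)
  finally have L1: "real k * ln 2 \<le> real d * ln 2 + ln (2 * real n) + (real s * ln 20 + (real m - real s) * (ln 20 - ln 19))"
    using s by (simp add: of_nat_diff)
  have L2: "(real m - real s) * (ln 20 - ln 19) = real m * ln 20 - real m * ln 19 - real s * ln 20 + real s * ln 19"
    by (simp add: algebra_simps)
  have L3: "real s * ln 19 \<le> real m * ln 19 / 20 + 1000 * ln 19"
  proof -
    have "real s * ln 19 \<le> (real m / 20 + 1000) * ln 19" using s by (intro mult_right_mono) auto
    then show ?thesis by (simp add: algebra_simps)
  qed
  have L4: "20 * (real m * ln 20) - 19 * (real m * ln 19) \<le> (23/4) * (real m * ln 2)"
  proof -
    have "real m * (20 * ln 20 - 19 * ln 19) \<le> real m * ((23/4) * ln 2)"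
      using logB by (intro mult_left_mono) auto
    then show ?thesis by (simp add: algebra_simps)
  qed
  have L5: "(11/25) * (real n * ln 2) \<le> real k * ln 2"
  proof -
    have "(11/25) * real n \<le> real k" using k by simp
    then show ?thesis by (simp add: mult.assoc[symmetric])
  qed
  have L6: "real d * ln 2 \<le> (427/2000) * (real n * ln 2)"
    using d by (simp add: mult.assoc[symmetric])
  have rn: "real n = real m + real d" using md by simp
  have L7: "real m * ln 2 = real n * ln 2 - real d * ln 2"
    unfolding rn by (simp add: algebra_simps)
  have asy': "ln (2 * real n) + 1000 * ln 19 < (61/160000) * (real n * ln 2)"
    using asy by (simp add: mult.assoc)
  show False using L1 L2 L3 L4 L5 L6 L7 asy' by linarith
qed

definition supp :: "(nat \<Rightarrow> bit) \<Rightarrow> nat set" where "supp v = {i. v i \<noteq> 0}"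

lemma bit_add_ne0: "(a + b \<noteq> (0::bit)) \<longleftrightarrow> ((a \<noteq> 0) \<noteq> (b \<noteq> 0))"
  by (cases a; cases b) simp_all

lemma supp_add: "supp (v + w) = sd (supp v) (supp w)"
  unfolding supp_def sd_def using bit_add_ne0[of "v _" "w _"] by auto

lemma supp_inj: "supp v = supp w \<Longrightarrow> v = w"
proof (rule ext)
  fix i assume "supp v = supp w"
  then have "(v i \<noteq> 0) = (w i \<noteq> 0)" unfolding supp_def by blast
  then show "v i = w i" by (cases "v i"; cases "w i") simp_all
qed

lemma supp_zero[simp]: "supp 0 = {}" by (simp add: supp_def)

lemma supp_empty_iff: "supp v = {} \<longleftrightarrow> v = 0"
  using supp_inj[of v 0] by auto

lemma add_self_fun: "(v::nat \<Rightarrow> bit) + v = 0"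
  by (rule ext) simp

lemma supp_cube: "v \<in> cube n \<Longrightarrow> supp v \<subseteq> {..<n}"
  unfolding cube_def supp_def by (auto simp: not_less[symmetric])

lemma finite_cube: "finite (cube n)"
proof -
  have "cube n \<subseteq> (\<lambda>S i. if i \<in> S then 1 else 0) ` Pow {..<n}"
  proof
    fix v assume v: "v \<in> cube n"
    have "v = (\<lambda>i. if i \<in> supp v then 1 else 0)"
      by (rule ext) (simp add: supp_def)
    then show "v \<in> (\<lambda>S i. if i \<in> S then 1 else 0) ` Pow {..<n}" using supp_cube[OF v] by blast
  qed
  then show ?thesis by (rule finite_subset) simp
qed

lemma card_ge_dim:
  assumes fin: "finite F" and sub: "f2.subspace F"
  shows "2 ^ f2.dim F \<le> card F"
proof -
  obtain B where B: "B \<subseteq> F" "f2.independent B" "F \<subseteq> f2.span B" "card B = f2.dim F"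
    by (rule f2.basis_exists)
  have finB: "finite B" using B(1) fin by (rule finite_subset)
  define g where "g T = (\<Sum>v\<in>B. (\<lambda>i. (if v \<in> T then 1 else 0) * v i))" for T
  have gF: "g T \<in> F" for T
    unfolding g_def
  proof (rule f2.subspace_sum[OF sub])
    fix v assume "v \<in> B"
    then have "v \<in> F" using B(1) by auto
    then show "(\<lambda>i. (if v \<in> T then 1 else 0) * v i) \<in> F"
      using f2.subspace_scale[OF sub] by blast
  qed
  have inj: "inj_on g (Pow B)"
  proof (rule inj_onI, rule ccontr)
    fix T T' assume T: "T \<in> Pow B" "T' \<in> Pow B" "g T = g T'" "T \<noteq> T'"
    define u where "u v = (if v \<in> T then 1 else 0) - (if v \<in> T' then (1::bit) else 0)" for v
    have "(\<Sum>v\<in>B. (\<lambda>i. u v * v i)) = (\<Sum>v\<in>B. (\<lambda>i. (if v \<in> T then 1 else 0) * v i) - (\<lambda>i. (if v \<in> T' then 1 else 0) * v i))"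
      by (intro sum.cong refl ext) (simp only: u_def minus_apply left_diff_distrib)
    also have "\<dots> = g T - g T'"
      unfolding g_def by (rule sum_subtractf)
    also have "\<dots> = 0" using T by simp
    finally have z: "(\<Sum>v\<in>B. (\<lambda>i. u v * v i)) = 0" .
    obtain v where v: "v \<in> B" "(v \<in> T) \<noteq> (v \<in> T')" using T by blast
    have "u v \<noteq> 0" using v by (auto simp: u_def)
    then have "f2.dependent B" using f2.dependent_finite[OF finB] z v(1) by blast
    then show False using B(2) by simp
  qed
  have "card (Pow B) \<le> card F"
    using card_inj_on_le[OF inj _ fin] gF by blast
  then show ?thesis using B(4) finB by (simp add: card_Pow)
qed


lemma fiber_bound:
  fixes S :: "nat set" and F :: "(nat \<Rightarrow> bit) set"
  assumes fin: "finite F" and cl: "\<And>v w. v \<in> F \<Longrightarrow> w \<in> F \<Longrightarrow> v + w \<in> F" and finS: "finite S"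
  shows "card F \<le> 2 ^ card S * card {v \<in> F. \<forall>i\<in>S. v i = 0}"
proof -
  define r where "r v = supp v \<inter> S" for v
  define K where "K = {v \<in> F. \<forall>i\<in>S. v i = 0}"
  have finK: "finite K" using fin by (simp add: K_def)
  have fib: "card {v \<in> F. r v = T} \<le> card K" if T: "T \<in> r ` F" for T
  proof -
    obtain v0 where v0: "v0 \<in> F" "r v0 = T" using T by blast
    have "inj_on (\<lambda>v. v + v0) {v \<in> F. r v = T}" by (rule inj_onI) simp
    moreover have "(\<lambda>v. v + v0) ` {v \<in> F. r v = T} \<subseteq> K"
    proof
      fix w assume "w \<in> (\<lambda>v. v + v0) ` {v \<in> F. r v = T}"
      then obtain v where v: "v \<in> F" "r v = T" "w = v + v0" by blast
      have "\<forall>i\<in>S. w i = 0"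
      proof
        fix i assume i: "i \<in> S"
        have "(v i \<noteq> 0) = (v0 i \<noteq> 0)"
          using v(2) v0(2) i unfolding r_def supp_def by blast
        then show "w i = 0" using v(3) bit_add_ne0[of "v i" "v0 i"] by auto
      qed
      then show "w \<in> K" using v cl v0 by (simp add: K_def)
    qed
    ultimately show ?thesis using finK by (meson card_inj_on_le)
  qed
  have eqF: "F = (\<Union>T\<in>r ` F. {v \<in> F. r v = T})" by auto
  have "card F \<le> (\<Sum>T\<in>r ` F. card {v \<in> F. r v = T})"
    by (subst eqF) (rule card_UN_le[OF finite_imageI[OF fin]])
  also have "\<dots> \<le> card (r ` F) * card K"
    using sum_bounded_above[of "r ` F" "\<lambda>T. card {v \<in> F. r v = T}" "card K"] fib by simp
  also have "card (r ` F) \<le> 2 ^ card S"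
  proof -
    have "r ` F \<subseteq> Pow S" by (auto simp: r_def)
    then have "card (r ` F) \<le> card (Pow S)" using finS by (simp add: card_mono)
    then show ?thesis using finS by (simp add: card_Pow)
  qed
  finally show ?thesis unfolding K_def by (simp add: mult_right_mono)
qed

lemma focal_from_three:
  assumes F0: "0 \<in> F" and y: "y1 \<in> F" "y2 \<in> F" "y3 \<in> F"
    and nz: "y1 \<noteq> 0" "y2 \<noteq> 0" "y3 \<noteq> 0"
    and dj: "supp y1 \<inter> supp y2 = {}" "supp y1 \<inter> supp y3 = {}" "supp y2 \<inter> supp y3 = {}"
  shows "contains_focal4 n F"
proof -
  define x where "x j = (if j = 1 then y1 else if j = 2 then y2 else if j = 3 then y3 else 0)" for j :: nat
  have s: "supp y1 \<noteq> {}" "supp y2 \<noteq> {}" "supp y3 \<noteq> {}" using nz supp_empty_iff by auto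
  have ne: "y1 \<noteq> y2" "y1 \<noteq> y3" "y2 \<noteq> y3" using s dj by auto
  have e: "{0..3::nat} = {0,1,2,3}" by auto
  have img: "x ` {0..3} \<subseteq> F" unfolding e x_def using F0 y by auto
  have inj: "inj_on x {0..3}" unfolding e x_def inj_on_def using nz ne by auto
  have cnt: "card {j \<in> {1,2,3}. x j i = x 0 i} \<ge> 2" for i
  proof -
    have x0: "x 0 i = 0" by (simp add: x_def)
    have "y1 i = 0 \<or> y2 i = 0" "y1 i = 0 \<or> y3 i = 0" "y2 i = 0 \<or> y3 i = 0"
      using dj unfolding supp_def by auto
    then have "{2,3} \<subseteq> {j \<in> {1,2,3}. x j i = x 0 i} \<or> {1,3} \<subseteq> {j \<in> {1,2,3}. x j i = x 0 i} \<or> {1,2} \<subseteq> {j \<in> {1,2,3}. x j i = x 0 i}"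
      unfolding x0 by (auto simp: x_def)
    moreover have fS: "finite {j \<in> {1,2,3::nat}. x j i = x 0 i}" by simp
    ultimately show ?thesis
    proof (elim disjE)
      assume "{2,3} \<subseteq> {j \<in> {1,2,3}. x j i = x 0 i}"
      from card_mono[OF fS this] show ?thesis by simp
    next
      assume "{1,3} \<subseteq> {j \<in> {1,2,3}. x j i = x 0 i}"
      from card_mono[OF fS this] show ?thesis by simp
    next
      assume "{1,2} \<subseteq> {j \<in> {1,2,3}. x j i = x 0 i}"
      from card_mono[OF fS this] show ?thesis by simp
    qed
  qed
  show ?thesis unfolding contains_focal4_def focal_def using img inj cnt by blast
qed

lemma exists_nonzero:
  assumes "finite F" "2 \<le> card F"
  shows "\<exists>v\<in>F. v \<noteq> (0::nat \<Rightarrow> bit)"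
proof (rule ccontr)
  assume "\<not> ?thesis"
  then have "F \<subseteq> {0}" by auto
  then have "card F \<le> card {0::nat \<Rightarrow> bit}" by (rule card_mono[rotated]) simp
  then have "card F \<le> 1" by simp
  then show False using assms by simp
qed

lemma min_weight:
  assumes "finite F" "v0 \<in> F" "v0 \<noteq> 0"
  obtains y where "y \<in> F" "y \<noteq> 0" "\<And>v. v \<in> F \<Longrightarrow> v \<noteq> 0 \<Longrightarrow> card (supp y) \<le> card (supp v)"
proof -
  define W where "W = (\<lambda>v. card (supp v)) ` (F - {0})"
  have fW: "finite W" using assms(1) by (simp add: W_def)
  have "card (supp v0) \<in> W" using assms(2,3) unfolding W_def by blast
  then have nW: "W \<noteq> {}" by blast
  have "Min W \<in> W" using fW nW by (rule Min_in)
  then obtain y where y0: "Min W = card (supp y)" "y \<in> F - {0}" unfolding W_def by (rule imageE)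
  have y: "y \<in> F - {0}" "card (supp y) = Min W" using y0 by simp_all
  have mw: "card (supp y) \<le> card (supp v)" if "v \<in> F" "v \<noteq> 0" for v
  proof -
    have "card (supp v) \<in> W" using that unfolding W_def by blast
    then have "Min W \<le> card (supp v)" by (rule Min_le[OF fW])
    then show ?thesis using y(2) by simp
  qed
  have yF: "y \<in> F" "y \<noteq> 0" using y(1) by auto
  show ?thesis by (rule that[OF yF mw])
qed

lemma main_contra:
  fixes F :: "(nat \<Rightarrow> bit) set" and n :: nat
  assumes FC: "F \<subseteq> cube n" and sub: "f2.subspace F" and dimF: "real (f2.dim F) \<ge> 0.44 * real n"
    and nof: "\<not> contains_focal4 n F"
    and n1: "n \<ge> 474479"
    and asyA: "ln (2 * real n) + 1000 * ln 10 < (1/8525) * real n * ln 2"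
    and asyB: "ln (2 * real n) + 1000 * ln 19 < (61/160000) * real n * ln 2"
  shows False
proof -
  define k where "k = f2.dim F"
  have finF: "finite F" using FC finite_cube by (rule finite_subset)
  have cardF: "2 ^ k \<le> card F" unfolding k_def by (rule card_ge_dim[OF finF sub])
  have F0: "0 \<in> F" using f2.subspace_0[OF sub] .
  have Fadd: "\<And>v w. v \<in> F \<Longrightarrow> w \<in> F \<Longrightarrow> v + w \<in> F" using f2.subspace_add[OF sub] by blast
  have three: False if "y1 \<in> F" "y2 \<in> F" "y3 \<in> F" "y1 \<noteq> 0" "y2 \<noteq> 0" "y3 \<noteq> 0"
    "supp y1 \<inter> supp y2 = {}" "supp y1 \<inter> supp y3 = {}" "supp y2 \<inter> supp y3 = {}" for y1 y2 y3
    using focal_from_three[OF F0 that] nof by blast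
  have rk: "real k \<ge> 0.44 * real n" using dimF k_def by simp
  have k1: "k \<ge> 1" using rk n1 by (cases k) auto
  have "(2::nat) ^ 1 \<le> 2 ^ k" by (rule power_increasing[OF k1]) simp
  then have "(2::nat) \<le> 2 ^ k" by simp
  then obtain v0 where v0: "v0 \<in> F" "v0 \<noteq> 0" using exists_nonzero[OF finF] cardF by (meson order_trans)
  obtain y1 where y1: "y1 \<in> F" "y1 \<noteq> 0" and dmin: "\<And>v. v \<in> F \<Longrightarrow> v \<noteq> 0 \<Longrightarrow> card (supp y1) \<le> card (supp v)"
    using min_weight[OF finF v0] by blast
  define d where "d = card (supp y1)"
  define S1 where "S1 = supp y1"
  have S1n: "S1 \<subseteq> {..<n}" using supp_cube y1 FC S1_def by blast
  have dn: "d \<le> n" using card_mono[OF _ S1n] by (simp add: d_def S1_def)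
  have injF: "inj_on supp F" by (meson inj_onI supp_inj)
  show False
  proof (cases "real d \<ge> (427/2000) * real n")
    case True
    define s where "s = n div 11 + 1000"
    have EA': "n div 11 + 1000 \<le> n \<and>
      real n - 2 * real d + 1 \<le> 2 * min ((real n - real (n div 11) - real (1000::nat)) * (1581/5000)) (real (n div 11) / (1581/5000)) * (real (1000::nat) - 2) / (real (1000::nat) - 1)"
      using EA[rule_format, OF n1 True] .
    have CI: "supp ` F \<subseteq> Pow {..<n}" using supp_cube FC by blast
    have C0: "{} \<in> supp ` F" using F0 by (metis image_eqI supp_zero)
    have Cc: "sd a b \<in> supp ` F" if "a \<in> supp ` F" "b \<in> supp ` F" for a b
      using that Fadd by (auto simp: supp_add[symmetric])
    have CD: "d \<le> card c" if "c \<in> supp ` F" "c \<noteq> {}" for c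
      using that dmin supp_empty_iff by (auto simp: d_def)
    have cb: "real (card (supp ` F)) \<le> 2 * real d * real (card {x \<in> Pow {..<n}. card x \<le> n div 11 + 1000})"
      by (rule code_bound[OF _ CI C0 Cc CD, of "1581/5000" 1000 "n div 11"]) (use EA' in simp_all)
    have cardC: "card (supp ` F) = card F" using card_image[OF injF] .
    define B where "B = (\<Sum>i\<le>s. real (n choose i))"
    have cardB: "real (card {x \<in> Pow {..<n}. card x \<le> n div 11 + 1000}) = B"
      unfolding B_def s_def using ball_card[of "{..<n}" "n div 11 + 1000"] by simp
    have sn: "s \<le> n" using EA' s_def by simp
    have bt: "B * ((1 / 11) ^ s * (1 - 1 / 11) ^ (n - s)) \<le> 1"
      unfolding B_def by (rule binom_tail[OF _ _ sn]) simp_all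
    have sb: "real s \<le> real n / 11 + 1000"
      using div_bounds(1)[of "n div 11" n 11] by (simp add: s_def)
    have Bnn: "0 \<le> B" unfolding B_def by (simp add: sum_nonneg)
    have "real ((2::nat) ^ k) \<le> real (card F)" using cardF by (simp only: of_nat_le_iff)
    then have "(2::real) ^ k \<le> real (card F)" by simp
    also have "\<dots> \<le> 2 * real d * B" using cb cardC cardB by simp
    also have "\<dots> \<le> 2 * real n * B" using dn Bnn by (intro mult_right_mono) auto
    finally have h: "(2::real) ^ k \<le> 2 * real n * B" .
    show False by (rule numA[OF h bt sn sb rk asyA]) (use n1 in simp)
  next
    case False
    then have dsmall: "real d < (427/2000) * real n" by simp
    define C1 where "C1 = {v \<in> F. \<forall>i\<in>S1. v i = 0}"
    have finS1: "finite S1" using S1n finite_subset by blast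
    have fb1: "card F \<le> 2 ^ d * card C1"
      using fiber_bound[OF finF Fadd finS1] by (simp add: C1_def d_def S1_def)
    have C1F: "C1 \<subseteq> F" by (auto simp: C1_def)
    have finC1: "finite C1" using finF C1F finite_subset by blast
    have C10: "0 \<in> C1" using F0 by (simp add: C1_def)
    have C1add: "v + w \<in> C1" if "v \<in> C1" "w \<in> C1" for v w
      using that Fadd by (auto simp: C1_def)
    have kd: "k \<ge> d + 1"
    proof -
      have "real d < real k" using dsmall rk n1 by simp
      then show ?thesis by simp
    qed
    have "2 ^ d * 2 \<le> 2 ^ d * card C1"
    proof -
      have "2 ^ d * 2 = (2::nat) ^ (d + 1)" by simp
      also have "\<dots> \<le> 2 ^ k" by (rule power_increasing[OF kd]) simp
      also have "\<dots> \<le> 2 ^ d * card C1" using cardF fb1 by linarith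
      finally show ?thesis .
    qed
    then have "2 \<le> card C1" by simp
    then obtain w0 where w0: "w0 \<in> C1" "w0 \<noteq> 0" using exists_nonzero[OF finC1] by blast
    obtain y2 where y2: "y2 \<in> C1" "y2 \<noteq> 0" and d2min: "\<And>v. v \<in> C1 \<Longrightarrow> v \<noteq> 0 \<Longrightarrow> card (supp y2) \<le> card (supp v)"
      using min_weight[OF finC1 w0] by blast
    define d2 where "d2 = card (supp y2)"
    have dj1v: "S1 \<inter> supp v = {}" if "v \<in> C1" for v
      using that by (auto simp: C1_def supp_def)
    have inters: "supp v \<inter> supp y2 \<noteq> {}" if v: "v \<in> C1" "v \<noteq> 0" for v
    proof
      assume e: "supp v \<inter> supp y2 = {}"
      have y2F: "y2 \<in> F" using C1F y2(1) by blast
      have vF: "v \<in> F" using C1F v(1) by blast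
      have a: "supp y1 \<inter> supp y2 = {}" using dj1v[OF y2(1)] by (simp add: S1_def)
      have b: "supp y1 \<inter> supp v = {}" using dj1v[OF v(1)] by (simp add: S1_def)
      have c: "supp y2 \<inter> supp v = {}" using e by blast
      show False by (rule three[OF y1(1) y2F vF y1(2) y2(2) v(2) a b c])
    qed
    have finS2: "finite (supp y2)" using supp_cube C1F y2(1) FC finite_subset by blast
    have fb2: "card C1 \<le> 2 ^ d2 * card {v \<in> C1. \<forall>i\<in>supp y2. v i = 0}"
      using fiber_bound[OF finC1 C1add finS2] by (simp add: d2_def)
    have "{v \<in> C1. \<forall>i\<in>supp y2. v i = 0} = {0}"
    proof
      show "{v \<in> C1. \<forall>i\<in>supp y2. v i = 0} \<subseteq> {0}"
      proof
        fix v assume v: "v \<in> {v \<in> C1. \<forall>i\<in>supp y2. v i = 0}"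
        then have "supp v \<inter> supp y2 = {}" by (auto simp: supp_def)
        then show "v \<in> {0}" using inters v by auto
      qed
      show "{0} \<subseteq> {v \<in> C1. \<forall>i\<in>supp y2. v i = 0}" using C10 by simp
    qed
    then have fb2': "card C1 \<le> 2 ^ d2" using fb2 by simp
    have kdd: "k \<le> d + d2"
    proof -
      have "2 ^ d * card C1 \<le> 2 ^ d * 2 ^ d2" using fb2' by (rule mult_le_mono2)
      then have "(2::nat) ^ k \<le> 2 ^ d * 2 ^ d2" using cardF fb1 by linarith
      then have "(2::nat) ^ k \<le> 2 ^ (d + d2)" by (simp add: power_add)
      then show ?thesis by simp
    qed
    define m where "m = n - d"
    define I where "I = {..<n} - S1"
    have cardI: "card I = m" unfolding I_def m_def d_def S1_def[symmetric]
      using S1n by (simp add: card_Diff_subset finS1)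
    have finI: "finite I" by (simp add: I_def)
    have md: "m + d = n" using dn m_def by simp
    have mbig: "m \<ge> 50000"
    proof -
      have "real m + real d = real n" using md by (metis of_nat_add)
      then have "real m = real n - real d" by simp
      then show ?thesis using dsmall n1 by simp
    qed
    have EB': "m div 20 + 1000 \<le> m \<and>
      real m - 2 * real d2 + 1 \<le> 2 * min ((real m - real (m div 20) - real (1000::nat)) * (1147/5000)) (real (m div 20) / (1147/5000)) * (real (1000::nat) - 2) / (real (1000::nat) - 1)"
    proof -
      have rmd: "real m + real d = real n" using md by (metis of_nat_add)
      have a1: "real d < (427/2000) * (real m + real d)" unfolding rmd by (rule dsmall)
      have a2: "real k \<ge> 0.44 * (real m + real d)" unfolding rmd by (rule rk)
      show ?thesis using EB[rule_format, OF mbig a1 a2 kdd] .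
    qed
    have CI: "supp ` C1 \<subseteq> Pow I"
    proof
      fix c assume "c \<in> supp ` C1"
      then obtain v where v: "v \<in> C1" "c = supp v" by blast
      have "supp v \<subseteq> {..<n}" using supp_cube v(1) C1F FC by blast
      then show "c \<in> Pow I" using dj1v[OF v(1)] v(2) by (auto simp: I_def)
    qed
    have C0: "{} \<in> supp ` C1" using C10 by (metis image_eqI supp_zero)
    have Cc: "sd a b \<in> supp ` C1" if "a \<in> supp ` C1" "b \<in> supp ` C1" for a b
      using that C1add by (auto simp: supp_add[symmetric])
    have CD: "d2 \<le> card c" if "c \<in> supp ` C1" "c \<noteq> {}" for c
      using that d2min supp_empty_iff by (auto simp: d2_def)
    have cb: "real (card (supp ` C1)) \<le> 2 * real d2 * real (card {x \<in> Pow I. card x \<le> m div 20 + 1000})"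
      by (rule code_bound[OF finI CI C0 Cc CD, of "1147/5000" 1000 "m div 20"]) (use EB' cardI in simp_all)
    have cardC: "card (supp ` C1) = card C1" by (rule card_image[OF inj_on_subset[OF injF C1F]])
    define s where "s = m div 20 + 1000"
    define B where "B = (\<Sum>i\<le>s. real (m choose i))"
    have cardB: "real (card {x \<in> Pow I. card x \<le> m div 20 + 1000}) = B"
      unfolding B_def s_def using ball_card[OF finI, of "m div 20 + 1000"] cardI by simp
    have sm: "s \<le> m" using EB' s_def by simp
    have bt: "B * ((1 / 20) ^ s * (1 - 1 / 20) ^ (m - s)) \<le> 1"
      unfolding B_def by (rule binom_tail[OF _ _ sm]) simp_all
    have sb: "real s \<le> real m / 20 + 1000"
      using div_bounds(1)[of "m div 20" m 20] by (simp add: s_def)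
    have Bnn: "0 \<le> B" unfolding B_def by (simp add: sum_nonneg)
    have d2n: "d2 \<le> n"
    proof -
      have "supp y2 \<subseteq> {..<n}" using supp_cube y2(1) C1F FC by blast
      then show ?thesis using card_mono[of "{..<n}" "supp y2"] by (simp add: d2_def)
    qed
    have nk: "(2::nat) ^ k \<le> 2 ^ d * card C1" using cardF fb1 by (rule le_trans)
    have "real ((2::nat) ^ k) \<le> real (2 ^ d * card C1)" using nk by (simp only: of_nat_le_iff)
    then have "(2::real) ^ k \<le> 2 ^ d * real (card C1)" by simp
    also have "\<dots> \<le> 2 ^ d * (2 * real d2 * B)" using cb cardC cardB by simp
    also have "\<dots> \<le> 2 ^ d * (2 * real n * B)" using d2n Bnn by (intro mult_left_mono mult_right_mono) auto
    finally have h: "(2::real) ^ k \<le> 2 ^ d * (2 * real n * B)" .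
    show False by (rule numB[OF h bt sm sb rk md dsmall asyB]) (use n1 in simp)
  qed
qed


theorem corollary4p2:
  shows "\<exists>n0::nat. \<forall>n\<ge>n0. \<forall>F.
     F \<subseteq> cube n \<and> f2.subspace F \<and> real (f2.dim F) \<ge> 0.44 * real n
       \<longrightarrow> contains_focal4 n F"
proof -
  have l2: "ln (2::real) > 0" by simp
  obtain NA where NA: "\<forall>n\<ge>NA. ln (2 * real n) + 1000 * ln 10 < (ln 2 / 8525) * real n"
    using asy1[of "ln 2 / 8525" "1000 * ln 10"] l2 by auto
  obtain NB where NB: "\<forall>n\<ge>NB. ln (2 * real n) + 1000 * ln 19 < ((61/160000) * ln 2) * real n"
    using asy1[of "(61/160000) * ln 2" "1000 * ln 19"] l2 by auto
  define n0 where "n0 = max 474479 (max NA NB)"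
  have "contains_focal4 n F"
    if n: "n \<ge> n0" and F: "F \<subseteq> cube n" "f2.subspace F" "real (f2.dim F) \<ge> 0.44 * real n" for n F
  proof (rule ccontr)
    assume nof: "\<not> contains_focal4 n F"
    have n1: "n \<ge> 474479" using n by (simp add: n0_def)
    have "ln (2 * real n) + 1000 * ln 10 < (ln 2 / 8525) * real n" using NA n by (simp add: n0_def)
    then have aA: "ln (2 * real n) + 1000 * ln 10 < (1/8525) * real n * ln 2" by (simp add: algebra_simps)
    have "ln (2 * real n) + 1000 * ln 19 < ((61/160000) * ln 2) * real n" using NB n by (simp add: n0_def)
    then have aB: "ln (2 * real n) + 1000 * ln 19 < (61/160000) * real n * ln 2" by (simp add: algebra_simps)
    show False by (rule main_contra[OF F nof n1 aA aB])
  qed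
  then show ?thesis by blast
qed

end
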